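(* Let $k>0$, $p\in\mathbb C[z]\setminus\{0\}$ and $m\in\mathbb N$, and put $q_n=kz((1+z)^n-p)$. Then there are $n_0\in\mathbb N$, a sequence $\{W_n\}_{n\ge n_0}$ of connected non-empty open subsets of $\mathbb C$ containing $0$, and a sequence $\{r_n\}_{n\ge n_0}$ of polynomials of degree $m$ such that $r_n\to z^m$ (coefficientwise), $\lim_{n\to\infty}\sup_{z\in W_n}|z|=0$, and for each $n\ge n_0$: $r_n$ divides $q_n$, $q_n(W_n)\subseteq\mathbb D$, and all zeros of $r_n$ lie in $W_n$.
   Context: $\mathbb D=\{z\in\mathbb C:|z|<1\}$. *)

theory Defs
  imports "HOL-Analysis.Analysis" "HOL-Computational_Algebra.Polynomial"
begin

definition qpoly :: "real \<Rightarrow> complex poly \<Rightarrow> nat \<Rightarrow> complex poly" where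
  "qpoly k p n = smult (complex_of_real k) ([:0, 1:] * ([:1, 1:] ^ n - p))"

end

theory Submission
  imports Defs "HOL-Complex_Analysis.Complex_Analysis" "HOL-Real_Asymp.Real_Asymp"
    "HOL-Computational_Algebra.Fundamental_Theorem_Algebra"
begin

lemma zorder_poly:
  fixes p :: "complex poly"
  assumes "p \<noteq> 0"
  shows "zorder (poly p) a = int (order a p)"
proof -
  obtain q where q: "p = [:- a, 1:] ^ order a p * q" "\<not> [:- a, 1:] dvd q"
    using order_decomp[OF assms] by blast
  have qa: "poly q a \<noteq> 0" using q(2) by (simp add: poly_eq_0_iff_dvd)
  show ?thesis
  proof (rule zorder_eqI[of UNIV a "poly q"])
    show "poly q holomorphic_on UNIV" by (intro holomorphic_intros)
    fix w assume "w \<in> (UNIV::complex set)" "w \<noteq> a"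
    show "poly p w = poly q w * (w - a) powi int (order a p)"
      by (subst q(1)) (simp add: poly_power power_int_of_nat mult.commute)
  qed (use qa in auto)
qed

lemma size_filter_eq_sum:
  "size (filter_mset P M) = (\<Sum>x\<in>{x\<in>set_mset M. P x}. count M x)"
  by (simp add: size_multiset_overloaded_eq)

lemma exists_divisor:
  fixes f :: "complex poly"
  assumes "f \<noteq> 0" "m \<le> size (filter_mset P (proots f))"
  shows "\<exists>N. size N = m \<and> (\<forall>x\<in>#N. P x) \<and> (\<Prod>x\<in>#N. [:-x,1:]) dvd f"
proof -
  obtain ys where ys: "mset ys = filter_mset P (proots f)" using ex_mset by blast
  define N where "N = mset (take m ys)"
  have len: "length ys \<ge> m" using assms(2) ys by (metis size_mset)
  have sz: "size N = m" using len by (simp add: N_def)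
  have sub: "N \<subseteq># filter_mset P (proots f)"
  proof -
    have "mset ys = N + mset (drop m ys)" unfolding N_def
      by (metis append_take_drop_id mset_append)
    thus ?thesis using ys by (metis mset_subset_eq_add_left)
  qed
  hence sub2: "N \<subseteq># proots f" using multiset_filter_subset subset_mset.order_trans by blast
  have PN: "\<forall>x\<in>#N. P x" using sub by (auto dest: mset_subset_eqD)
  have "(\<Prod>x\<in>#N. [:-x,1:]) dvd (\<Prod>x\<in>#proots f. [:-x,1:])"
    by (intro prod_mset_subset_imp_dvd image_mset_subseteq_mono sub2)
  also have "\<dots> dvd f"
    by (subst (2) complex_poly_decompose_multiset[symmetric]) (rule dvd_smult, simp)
  finally show ?thesis using sz PN by blast
qed

lemma coeff_prod_roots_bound:
  fixes N :: "complex multiset" and e :: real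
  assumes "\<forall>x\<in>#N. norm x \<le> e" "e \<le> 1"
  shows "\<forall>i. norm (coeff (\<Prod>x\<in>#N. [:-x,1:]) i - coeff (monom 1 (size N)) i) \<le> (2^size N - 1) * e
          \<and> norm (coeff (\<Prod>x\<in>#N. [:-x,1:]) i) \<le> 2 ^ size N"
  using assms(1)
proof (induction N)
  case empty
  show ?case by (auto simp: coeff_monom)
next
  case (add x N)
  define r where "r = (\<Prod>x\<in>#N. [:-x,1:])"
  from add have IH: "\<And>i. norm (coeff r i - coeff (monom 1 (size N)) i) \<le> (2^size N - 1) * e"
     "\<And>i. norm (coeff r i) \<le> 2 ^ size N" unfolding r_def by auto
  have xe: "norm x \<le> e" using add.prems by auto
  have e0: "0 \<le> e" using xe norm_ge_zero order_trans by blast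
  have prodeq: "(\<Prod>x\<in>#add_mset x N. [:-x,1:]) = pCons 0 r - smult x r"
    by (simp add: r_def algebra_simps)
  show ?case
  proof
    fix i
    have b1: "norm (x * coeff r i) \<le> e * 2 ^ size N"
      using IH(2)[of i] xe by (simp add: norm_mult mult_mono e0)
    have "norm (coeff (pCons 0 r - smult x r) i) \<le> 2 ^ size N + e * 2 ^ size N"
    proof (cases i)
      case 0
      hence "norm (coeff (pCons 0 r - smult x r) i) = norm (x*coeff r i)" by simp
      thus ?thesis using b1 e0 by (smt (verit) zero_le_power)
    next
      case (Suc i') thus ?thesis using b1 IH(2)[of i'] norm_triangle_ineq4 order_trans add_mono
        by (smt (verit) coeff_diff coeff_pCons_Suc coeff_smult)
    qed
    also have "\<dots> \<le> 2 ^ size (add_mset x N)" using assms(2) by simp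
    finally have B2: "norm (coeff (pCons 0 r - smult x r) i) \<le> 2 ^ size (add_mset x N)" .
    have "norm (coeff (pCons 0 r - smult x r) i - coeff (monom 1 (size (add_mset x N))) i)
          \<le> (2^size N - 1) * e + e * 2 ^ size N"
    proof (cases i)
      case 0
      have "(0::real) \<le> (2^size N - 1) * e" using e0 by simp
      thus ?thesis using b1 0 by (simp add: coeff_monom)
    next
      case (Suc i')
      have "coeff (pCons 0 r - smult x r) i - coeff (monom 1 (size (add_mset x N))) i
           = (coeff r i' - coeff (monom 1 (size N)) i') - x * coeff r i"
        using Suc by (simp add: coeff_monom)
      thus ?thesis using b1 IH(1)[of i'] norm_triangle_ineq4 order_trans add_mono
        by (smt (verit))
    qed
    also have "\<dots> = (2^size (add_mset x N) - 1) * e" by (simp add: algebra_simps)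
    finally show "norm (coeff (\<Prod>x\<in>#add_mset x N. [:-x,1:]) i - coeff (monom 1 (size (add_mset x N))) i)
          \<le> (2^size (add_mset x N) - 1) * e \<and> norm (coeff (\<Prod>x\<in>#add_mset x N. [:-x,1:]) i) \<le> 2 ^ size (add_mset x N)"
      using B2 prodeq by simp
  qed
qed



lemma count_zeros:
  fixes Q :: "complex poly" and L \<beta> :: complex and t \<delta> :: real and n K :: nat
  defines "ctr \<equiv> (L - of_real t) / of_nat n" and "\<rho> \<equiv> (2*K+1)*pi / n"
  assumes n: "n > 0" and Q: "Q \<noteq> 0" and L: "exp L = \<beta>" and \<delta>: "\<delta> > 0"
    and Emin: "\<forall>w\<in>sphere L ((2*K+1)*pi). \<delta> \<le> norm (exp w - \<beta>)"
    and close: "\<forall>w\<in>sphere L ((2*K+1)*pi).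
        norm (exp (of_real t) * poly Q ((w - of_real t)/of_nat n) - (exp w - \<beta>)) < \<delta>"
  shows "2*K+1 \<le> size (filter_mset (\<lambda>z. z \<in> ball ctr \<rho>) (proots Q))"
proof -
  define f where "f z = exp (of_nat n * z + of_real t) - \<beta>" for z
  define G where "G z = exp (of_real t) * poly Q z" for z
  define g where "g z = G z - f z" for z
  define s where "s = ball ctr (2*\<rho>)"
  define \<gamma> where "\<gamma> = circlepath ctr \<rho>"
  have \<rho>: "\<rho> > 0" using n by (simp add: \<rho>_def)
  have nn: "of_nat n \<noteq> (0::complex)" using n by simp
  have key: "of_nat n * z + of_real t - L = of_nat n * (z - ctr)" for z
    using nn by (simp add: ctr_def field_simps)
  have sph: "of_nat n * z + of_real t \<in> sphere L ((2*K+1)*pi)" if "z \<in> sphere ctr \<rho>" for z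
  proof -
    have "dist L (of_nat n * z + of_real t) = norm (of_nat n * (z - ctr))"
      by (simp add: dist_norm) (metis key norm_minus_commute)
    also have "\<dots> = n * dist ctr z" by (simp add: norm_mult dist_norm norm_minus_commute)
    also have "\<dots> = (2*K+1)*pi" using that n by (simp add: \<rho>_def)
    finally show ?thesis by simp
  qed
  have back_eq: "(of_nat n * z + of_real t - of_real t) / of_nat n = z" for z :: complex
    using nn by (simp add: field_simps)
  have pimg: "path_image \<gamma> = sphere ctr \<rho>"
    unfolding \<gamma>_def using \<rho> by (simp add: path_image_circlepath_nonneg)
  have less: "norm (f z) > norm (g z)" if "z \<in> sphere ctr \<rho>" for z
  proof -
    have w: "of_nat n * z + of_real t \<in> sphere L ((2*K+1)*pi)" using sph[OF that] .
    have "norm (g z) < \<delta>"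
      using close[rule_format, OF w] unfolding g_def G_def f_def back_eq .
    also have "\<delta> \<le> norm (f z)" using Emin w unfolding f_def by blast
    finally show ?thesis .
  qed
  have fholo: "f holomorphic_on UNIV" unfolding f_def by (intro holomorphic_intros)
  have gholo: "g holomorphic_on UNIV" unfolding g_def G_def f_def by (intro holomorphic_intros)
  have fg: "(\<lambda>p. f p + g p) = poly (smult (exp (of_real t)) Q)"
    by (rule ext) (simp add: g_def G_def)
  have ZQ_fin: "finite {p\<in>s. f p + g p = 0}"
  proof (rule finite_subset[OF _ poly_roots_finite[OF Q]])
    show "{p\<in>s. f p + g p = 0} \<subseteq> {z. poly Q z = 0}" by (auto simp: g_def G_def)
  qed
  define zk where "zk k = (L + of_int (2*k) * of_real pi * \<i> - of_real t) / of_nat n" for k :: int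
  have Zf_sub: "{p\<in>s. f p = 0} \<subseteq> zk ` {-(2*int K+1)..2*int K+1}"
  proof
    fix z assume z: "z \<in> {p\<in>s. f p = 0}"
    hence "exp (of_nat n * z + of_real t) = exp L" using L by (simp add: f_def)
    then obtain k :: int where k: "of_nat n * z + of_real t = L + of_int (2 * k) * of_real pi * \<i>"
      by (auto simp: exp_eq)
    have zz: "z = zk k" unfolding zk_def using nn k by (simp add: field_simps)
    have "norm (of_nat n * (z - ctr)) = norm (of_int (2 * k) * of_real pi * \<i>)"
      using key[of z] k by simp
    hence "n * norm (z - ctr) = 2 * \<bar>k\<bar> * pi" by (simp add: norm_mult)
    moreover have "norm (z - ctr) < 2 * \<rho>" using z by (simp add: s_def dist_norm norm_minus_commute)
    ultimately have "2 * \<bar>k\<bar> * pi < n * (2 * \<rho>)" using n by (metis mult_strict_left_mono of_nat_0_less_iff)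
    also have "\<dots> = 2 * (2*K+1) * pi" using n by (simp add: \<rho>_def)
    finally have "real_of_int \<bar>k\<bar> < 2*K+1" by simp
    hence "\<bar>k\<bar> < 2 * int K + 1" by linarith
    hence "k \<in> {-(2*int K+1)..2*int K+1}" by auto
    thus "z \<in> zk ` {-(2*int K+1)..2*int K+1}" using zz by blast
  qed
  have Zf_fin: "finite {p\<in>s. f p = 0}" by (rule finite_subset[OF Zf_sub]) auto
  have homo: "\<forall>z. z \<notin> s \<longrightarrow> winding_number \<gamma> z = 0"
  proof (intro allI impI)
    fix z assume "z \<notin> s"
    hence "z \<notin> cball ctr \<rho>" using \<rho> by (auto simp: s_def)
    thus "winding_number \<gamma> z = 0" unfolding \<gamma>_def
      by (intro winding_number_zero_outside[of _ "cball ctr \<rho>"]) (use \<rho> in \<open>auto simp: path_image_circlepath_nonneg\<close>)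
  qed
  have R: "(\<Sum>p\<in>{p\<in>s. f p + g p = 0}. winding_number \<gamma> p * zorder (\<lambda>p. f p + g p) p)
          = (\<Sum>p\<in>{p\<in>s. f p = 0}. winding_number \<gamma> p * zorder f p)"
    apply (rule Rouche_theorem)
    using ZQ_fin Zf_fin fholo gholo homo less pimg \<rho>
    by (auto simp: s_def \<gamma>_def intro: holomorphic_on_subset)
  have wn: "winding_number \<gamma> p = (if p \<in> ball ctr \<rho> then 1 else 0)" if "p \<notin> sphere ctr \<rho>" for p
  proof (cases "p \<in> ball ctr \<rho>")
    case True thus ?thesis unfolding \<gamma>_def by (simp add: winding_number_circlepath dist_norm norm_minus_commute)
  next
    case False
    hence "p \<notin> cball ctr \<rho>" using that by auto
    hence "winding_number \<gamma> p = 0" unfolding \<gamma>_def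
      by (intro winding_number_zero_outside[of _ "cball ctr \<rho>"]) (use \<rho> in \<open>auto simp: path_image_circlepath_nonneg\<close>)
    thus ?thesis using False by simp
  qed
  have bs: "ball ctr \<rho> \<subseteq> s" using \<rho> by (auto simp: s_def)
  have et: "exp (of_real t :: complex) \<noteq> 0" by simp
  have "(\<Sum>p\<in>{p\<in>s. f p + g p = 0}. winding_number \<gamma> p * zorder (\<lambda>p. f p + g p) p)
      = (\<Sum>p\<in>{p\<in>s. f p + g p = 0}. if p \<in> ball ctr \<rho> then of_nat (order p Q) else 0)"
  proof (rule sum.cong[OF refl])
    fix p assume p: "p \<in> {p\<in>s. f p + g p = 0}"
    hence "p \<notin> sphere ctr \<rho>" using less by (metis (mono_tags, lifting) add_eq_0_iff mem_Collect_eq norm_minus_cancel order_less_irrefl)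
    thus "winding_number \<gamma> p * zorder (\<lambda>p. f p + g p) p = (if p \<in> ball ctr \<rho> then of_nat (order p Q) else 0)"
      using wn[of p] unfolding fg using Q et by (simp add: zorder_poly order_smult)
  qed
  also have "\<dots> = (\<Sum>p\<in>{p\<in>s. f p + g p = 0} \<inter> ball ctr \<rho>. of_nat (order p Q))"
    by (rule sum.inter_restrict[symmetric, OF ZQ_fin])
  also have "{p\<in>s. f p + g p = 0} \<inter> ball ctr \<rho> = {x\<in>set_mset (proots Q). x \<in> ball ctr \<rho>}"
    using bs Q by (auto simp: g_def G_def)
  also have "(\<Sum>p\<in>\<dots>. (of_nat (order p Q) :: complex)) = of_nat (size (filter_mset (\<lambda>z. z \<in> ball ctr \<rho>) (proots Q)))"
    using Q by (simp add: size_filter_eq_sum)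
  finally have LHS: "(\<Sum>p\<in>{p\<in>s. f p + g p = 0}. winding_number \<gamma> p * zorder (\<lambda>p. f p + g p) p)
     = of_nat (size (filter_mset (\<lambda>z. z \<in> ball ctr \<rho>) (proots Q)))" .
  have zo: "zorder f p = 1" if "f p = 0" for p
  proof (rule zorder_zero_eqI[of f UNIV])
    show "f holomorphic_on UNIV" by (rule fholo)
    have d: "(f has_field_derivative of_nat n * exp (of_nat n * p + of_real t)) (at p)"
      unfolding f_def[abs_def] by (auto intro!: derivative_eq_intros)
    show "(deriv ^^ nat 1) f p \<noteq> 0" using DERIV_imp_deriv[OF d] nn by simp
  qed (use that in auto)
  have "(\<Sum>p\<in>{p\<in>s. f p = 0}. winding_number \<gamma> p * zorder f p)
      = (\<Sum>p\<in>{p\<in>s. f p = 0}. if p \<in> ball ctr \<rho> then 1 else 0)"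
  proof (rule sum.cong[OF refl])
    fix p assume p: "p \<in> {p\<in>s. f p = 0}"
    hence "p \<notin> sphere ctr \<rho>" using less by fastforce
    thus "winding_number \<gamma> p * zorder f p = (if p \<in> ball ctr \<rho> then 1 else 0)"
      using wn[of p] zo[of p] p by simp
  qed
  also have "\<dots> = of_nat (card ({p\<in>s. f p = 0} \<inter> ball ctr \<rho>))"
    by (subst sum.inter_restrict[symmetric, OF Zf_fin]) simp
  finally have RHS: "(\<Sum>p\<in>{p\<in>s. f p = 0}. winding_number \<gamma> p * zorder f p)
      = of_nat (card ({p\<in>s. f p = 0} \<inter> ball ctr \<rho>))" .
  have eqn: "size (filter_mset (\<lambda>z. z \<in> ball ctr \<rho>) (proots Q)) = card ({p\<in>s. f p = 0} \<inter> ball ctr \<rho>)"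
    using R LHS RHS by (metis of_nat_eq_iff)
  have inj: "inj zk" unfolding inj_def zk_def using nn
    by (auto simp: field_simps)
  have sub: "zk ` {-int K..int K} \<subseteq> {p\<in>s. f p = 0} \<inter> ball ctr \<rho>"
  proof
    fix z assume "z \<in> zk ` {-int K..int K}"
    then obtain k where k: "k \<in> {-int K..int K}" "z = zk k" by auto
    have "of_nat n * z + of_real t = L + of_int (2*k) * of_real pi * \<i>"
      using k nn by (simp add: zk_def field_simps)
    moreover have "exp (L + of_int (2*k) * of_real pi * \<i>) = exp L" by (subst exp_eq) (rule exI[of _ k], simp)
    ultimately have fz: "f z = 0" using L by (simp add: f_def)
    have "z - ctr = of_int (2*k) * of_real pi * \<i> / of_nat n"
      using k nn by (simp add: zk_def ctr_def field_simps)
    hence "norm (z - ctr) = 2 * \<bar>k\<bar> * pi / n" by (simp add: norm_mult norm_divide)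
    also have "\<dots> < \<rho>"
    proof -
      have "\<bar>k\<bar> \<le> int K" using k(1) by auto
      hence "2 * real_of_int \<bar>k\<bar> < 2*K+1" by linarith
      hence "2 * \<bar>k\<bar> * pi < (2*K+1)*pi" by simp
      thus ?thesis using n by (simp add: \<rho>_def divide_strict_right_mono)
    qed
    finally have "z \<in> ball ctr \<rho>" by (simp add: dist_norm norm_minus_commute)
    thus "z \<in> {p\<in>s. f p = 0} \<inter> ball ctr \<rho>" using fz bs by auto
  qed
  have "2*K+1 = card (zk ` {-int K..int K})"
    using inj by (simp add: card_image inj_on_subset)
  also have "\<dots> \<le> card ({p\<in>s. f p = 0} \<inter> ball ctr \<rho>)"
    by (rule card_mono[OF _ sub]) (use Zf_fin in auto)
  finally show ?thesis using eqn by simp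
qed


lemma tendsto_ev:
  fixes f :: "nat \<Rightarrow> real"
  assumes "f \<longlonglongrightarrow> l" "e > 0"
  shows "eventually (\<lambda>n. \<bar>f n - l\<bar> < e) sequentially"
  using tendsto_iff[THEN iffD1, OF assms(1), rule_format, OF assms(2)]
  by (simp only: dist_real_def)

lemma dist_triple_le:
  fixes a a' c c' z z' :: complex
  shows "dist (a,c,z) (a',c',z') \<le> dist a a' + dist c c' + dist z z'"
proof -
  have "dist (c,z) (c',z') \<le> dist c c' + dist z z'"
    unfolding dist_Pair_Pair using sqrt_sum_squares_le_sum_abs[of "dist c c'" "dist z z'"] by simp
  moreover have "dist (a,c,z) (a',c',z') \<le> dist a a' + dist (c,z) (c',z')"
    unfolding dist_Pair_Pair[of a "(c,z)"] using sqrt_sum_squares_le_sum_abs[of "dist a a'" "dist (c,z) (c',z')"] by simp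
  ultimately show ?thesis by linarith
qed

lemma exp_Ln_bound:
  fixes x :: complex and n :: nat
  assumes "norm x \<le> 1/2"
  shows "norm (n * (Ln (1 + x) - x)) \<le> 2 * n * norm x ^ 2"
proof -
  have "norm (Ln (1 + x) - x) \<le> norm x^2 / (1 - norm x)"
    using Ln_approx_linear[of x] assms by simp
  also have "\<dots> \<le> norm x^2 / (1/2)"
    by (rule divide_left_mono) (use assms in auto)
  also have "\<dots> = 2 * norm x ^ 2" by simp
  finally have h: "norm (Ln (1 + x) - x) \<le> 2 * norm x ^ 2" .
  have "real n * norm (Ln (1 + x) - x) \<le> real n * (2 * norm x ^ 2)"
    by (rule mult_left_mono[OF h]) simp
  moreover have "norm (of_nat n * (Ln (1 + x) - x)) = real n * norm (Ln (1 + x) - x)"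
    by (simp only: norm_mult norm_of_nat)
  ultimately show ?thesis by (simp add: mult_ac)
qed

lemma core:
  fixes g :: "complex poly" and j :: nat and t :: "nat \<Rightarrow> real" and Rp \<delta> :: real
  defines "\<beta> \<equiv> (-1)^j * of_real (real j ^ j) * poly g 0"
  assumes \<delta>: "\<delta> > 0"
   and T1: "(\<lambda>n. (Rp + t n)^2 / real n) \<longlonglongrightarrow> 0"
   and T2: "(\<lambda>n. (Rp + t n) / real n) \<longlonglongrightarrow> 0"
   and T3: "(\<lambda>n. Rp / t n) \<longlonglongrightarrow> 0"
   and T4: "(\<lambda>n. exp (t n) * (t n / real n)^j) \<longlonglongrightarrow> real j ^ j"
   and T5: "eventually (\<lambda>n. t n \<ge> 0) sequentially"
   and T6: "j > 0 \<Longrightarrow> eventually (\<lambda>n. t n > 0) sequentially"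
  shows "eventually (\<lambda>n. \<forall>w. norm w \<le> Rp \<longrightarrow>
     norm (exp (of_real (t n)) * poly ([:1,1:]^n - [:0,1:]^j * g) ((w - of_real (t n)) / of_nat n)
       - (exp w - \<beta>)) < \<delta>) sequentially"
proof -
  define c0 :: complex where "c0 = of_real (real j ^ j)"
  define h :: "complex \<times> complex \<times> complex \<Rightarrow> complex"
    where "h y = (fst y - 1)^j * fst (snd y) * poly g (snd (snd y))" for y
  have hc: "isCont h (0, c0, 0)" unfolding h_def by (intro continuous_intros)
  have h0: "h (0, c0, 0) = \<beta>" by (simp add: h_def \<beta>_def c0_def)
  obtain \<eta> where \<eta>: "\<eta> > 0" "\<And>y. dist y (0, c0, 0) < \<eta> \<Longrightarrow> dist (h y) \<beta> < \<delta>/2"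
    using hc \<delta> h0 unfolding continuous_at_eps_delta by (metis half_gt_zero)
  define \<eta>1 where "\<eta>1 = min (1/4) (\<delta> / (7 * exp Rp))"
  have \<eta>1: "\<eta>1 > 0" "\<eta>1 \<le> 1/4" "3 * exp Rp * \<eta>1 < \<delta>/2"
  proof -
    show "\<eta>1 > 0" "\<eta>1 \<le> 1/4" using \<delta> by (auto simp: \<eta>1_def)
    have "\<eta>1 \<le> \<delta> / (7 * exp Rp)" by (simp add: \<eta>1_def)
    hence "3 * exp Rp * \<eta>1 \<le> 3 * exp Rp * (\<delta> / (7 * exp Rp))" by (intro mult_left_mono) auto
    also have "\<dots> = 3/7 * \<delta>" by simp
    also have "\<dots> < \<delta>/2" using \<delta> by simp
    finally show "3 * exp Rp * \<eta>1 < \<delta>/2" .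
  qed
  have E1: "eventually (\<lambda>n. (Rp + t n)^2 / real n < \<eta>1) sequentially"
    using tendsto_ev[OF T1 \<eta>1(1)] by (rule eventually_mono) linarith
  have E2: "eventually (\<lambda>n. \<bar>(Rp + t n) / real n\<bar> < min (\<eta>/3) (1/2)) sequentially"
  proof -
    have "min (\<eta>/3) (1/2) > 0" using \<eta> by simp
    from tendsto_ev[OF T2 this] show ?thesis by simp
  qed
  have E3: "eventually (\<lambda>n. \<bar>Rp / t n\<bar> < \<eta>/3) sequentially"
    using tendsto_ev[OF T3, of "\<eta>/3"] \<eta>(1) by simp
  have E4: "eventually (\<lambda>n. \<bar>exp (t n) * (t n / real n)^j - real j ^ j\<bar> < \<eta>/3) sequentially"
    using tendsto_ev[OF T4, of "\<eta>/3"] \<eta>(1) by simp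
  have E6: "eventually (\<lambda>n. j > 0 \<longrightarrow> t n > 0) sequentially"
    using T6 by (cases "j > 0") auto
  have E7: "eventually (\<lambda>n. n > 0) sequentially" by (rule eventually_gt_at_top)
  show ?thesis
    using E1 E2 E3 E4 T5 E6 E7
  proof eventually_elim
    case (elim n)
    define tn where "tn = t n"
    define cn where "cn = exp tn * (tn / real n)^j"
    from elim have n: "n > 0" and tn0: "tn \<ge> 0" and tnpos: "j > 0 \<Longrightarrow> tn > 0"
      and S1: "(Rp + tn)^2 / real n < \<eta>1" and S2: "\<bar>(Rp + tn) / real n\<bar> < min (\<eta>/3) (1/2)"
      and S3: "\<bar>Rp / tn\<bar> < \<eta>/3" and S4: "\<bar>cn - real j ^ j\<bar> < \<eta>/3"
      by (auto simp: tn_def cn_def)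
    have nn: "of_nat n \<noteq> (0::complex)" using n by simp
    show ?case
    proof (intro allI impI)
      fix w :: complex assume w: "norm w \<le> Rp"
      define x where "x = (w - of_real tn) / of_nat n"
      have Rp0: "Rp \<ge> 0" using w norm_ge_zero order_trans by blast
      have nx: "norm x \<le> (Rp + tn) / n"
      proof -
        have "norm (w - of_real tn) \<le> norm w + tn" using tn0 norm_triangle_ineq4[of w "of_real tn"] by simp
        thus ?thesis using w n by (simp add: x_def norm_divide divide_right_mono)
      qed
      have S2a: "\<bar>(Rp + tn) / real n\<bar> < \<eta>/3" and S2b: "\<bar>(Rp + tn) / real n\<bar> < 1/2"
        using S2 by (simp_all only: min_less_iff_conj)
      have S: "(Rp + tn) / n < 1/2" "(Rp + tn) / n < \<eta>/3"
        using S2a S2b abs_ge_self[of "(Rp + tn) / real n"] by linarith+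
      have x12: "norm x \<le> 1/2" using nx S by linarith
      define d where "d = of_nat n * (Ln (1 + x) - x)"
      have nd: "norm d \<le> 2 * n * norm x ^ 2" unfolding d_def by (rule exp_Ln_bound[OF x12])
      have "2 * n * norm x ^ 2 \<le> 2 * n * ((Rp + tn)/n)^2"
        using nx by (intro mult_left_mono power_mono) auto
      also have "\<dots> = 2 * ((Rp + tn)^2 / n)" using n by (simp add: power2_eq_square field_simps)
      also have "\<dots> < 2 * \<eta>1" using S1 by simp
      finally have nd2: "norm d < 2 * \<eta>1" using nd by linarith
      have x1: "1 + x \<noteq> 0"
      proof
        assume "1 + x = 0" hence "x = -1" by (simp add: add_eq_0_iff)
        thus False using x12 by simp
      qed
      have pow: "(1 + x)^n = exp (of_nat n * Ln (1 + x))"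
        using x1 by (simp add: exp_of_nat_mult)
      have nxeq: "of_nat n * x = w - of_real tn" using nn by (simp add: x_def)
      have "exp (of_real tn) * (1 + x)^n = exp (of_real tn + (d + (w - of_real tn)))"
        by (simp add: pow d_def exp_add[symmetric] algebra_simps nxeq[symmetric])
      also have "\<dots> = exp w * exp d" by (simp add: exp_add[symmetric] add.commute)
      finally have Aeq: "exp (of_real tn) * (1 + x)^n - exp w = exp w * (exp d - 1)" by (simp add: algebra_simps)
      have "norm (exp d - 1) \<le> 3/2 * norm d"
        by (rule norm_exp_bounds) (use nd2 \<eta>1 in linarith)
      moreover have "norm (exp w) \<le> exp Rp"
        using w by (simp) (meson complex_Re_le_cmod order_trans)
      ultimately have "norm (exp w) * norm (exp d - 1) \<le> exp Rp * (3/2 * norm d)"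
        by (intro mult_mono) auto
      hence "norm (exp w * (exp d - 1)) \<le> exp Rp * (3/2 * norm d)" by (simp only: norm_mult)
      also have "\<dots> \<le> exp Rp * (3/2 * (2 * \<eta>1))" using nd2 by simp
      also have "\<dots> < \<delta>/2" using \<eta>1 by simp
      finally have A: "norm (exp (of_real tn) * (1 + x)^n - exp w) < \<delta>/2" using Aeq by simp
      define a where "a = w / of_real tn"
      have ident: "exp (of_real tn) * x^j = of_real cn * (a - 1)^j"
      proof (cases "j = 0")
        case True thus ?thesis by (simp add: cn_def exp_of_real)
      next
        case False
        hence "tn > 0" using tnpos by simp
        hence "x = of_real (tn / real n) * (a - 1)" using nn
          by (simp add: x_def a_def field_simps)
        thus ?thesis by (simp add: cn_def exp_of_real power_mult_distrib power_divide)
      qed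
      have na: "norm a < \<eta>/3"
      proof (cases "tn = 0")
        case True thus ?thesis using \<eta> by (simp add: a_def)
      next
        case False
        hence "norm a = norm w / tn" using tn0 by (simp add: a_def norm_divide)
        also have "\<dots> \<le> Rp / tn" using w tn0 by (simp add: divide_right_mono)
        also have "\<dots> < \<eta>/3" using S3 abs_ge_self[of "Rp / tn"] by linarith
        finally show ?thesis .
      qed
      have "dist (a, of_real cn, x) (0, c0, 0) \<le> dist a 0 + dist (of_real cn) c0 + dist x 0"
        by (rule dist_triple_le)
      also have "\<dots> < \<eta>/3 + \<eta>/3 + \<eta>/3"
      proof -
        have "dist (of_real cn) c0 = \<bar>cn - real j ^ j\<bar>"
          unfolding c0_def dist_norm of_real_diff[symmetric] norm_of_real by (rule refl)
        thus ?thesis using na S4 nx S by (simp only: dist_norm diff_zero)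
      qed
      finally have "dist (h (a, of_real cn, x)) \<beta> < \<delta>/2" using \<eta>(2) by simp
      moreover have "h (a, of_real cn, x) = exp (of_real tn) * x^j * poly g x"
        unfolding h_def using ident by simp
      ultimately have B: "norm (exp (of_real tn) * x^j * poly g x - \<beta>) < \<delta>/2"
        by (simp add: dist_norm)
      have "poly ([:1,1:]^n - [:0,1:]^j * g) x = (1 + x)^n - x^j * poly g x"
        by (simp add: poly_power)
      hence eqAB: "exp (of_real tn) * poly ([:1,1:]^n - [:0,1:]^j * g) x - (exp w - \<beta>)
          = (exp (of_real tn) * (1 + x)^n - exp w) - (exp (of_real tn) * x^j * poly g x - \<beta>)"
        by (simp add: algebra_simps)
      have tri: "norm ((exp (of_real tn) * (1 + x)^n - exp w) - (exp (of_real tn) * x^j * poly g x - \<beta>))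
          \<le> norm (exp (of_real tn) * (1 + x)^n - exp w) + norm (exp (of_real tn) * x^j * poly g x - \<beta>)"
        by (rule norm_triangle_ineq4)
      have "norm (exp (of_real tn) * poly ([:1,1:]^n - [:0,1:]^j * g) x - (exp w - \<beta>)) < \<delta>/2 + \<delta>/2"
        unfolding eqAB using A B tri by linarith
      thus "norm (exp (of_real (t n)) * poly ([:1,1:]^n - [:0,1:]^j * g) ((w - of_real (t n)) / of_nat n)
       - (exp w - \<beta>)) < \<delta>" by (simp add: x_def tn_def)
    qed
  qed
qed


lemma prod_lin_props:
  fixes N :: "complex multiset"
  shows "(\<Prod>x\<in>#N. [:-x,1:]) \<noteq> 0 \<and> degree (\<Prod>x\<in>#N. [:-x,1:]) = size N
     \<and> (\<forall>z. poly (\<Prod>x\<in>#N. [:-x,1:]) z = 0 \<longleftrightarrow> z \<in># N)"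
proof (induction N)
  case empty thus ?case by simp
next
  case (add x N)
  define r where "r = (\<Prod>x\<in>#N. [:-x,1:])"
  have eq: "(\<Prod>x\<in>#add_mset x N. [:-x,1:]) = [:-x,1:] * r" unfolding r_def by simp
  have r0: "r \<noteq> 0" "degree r = size N" "\<forall>z. poly r z = 0 \<longleftrightarrow> z \<in># N"
    using add unfolding r_def by auto
  have lx: "[:-x,1:] \<noteq> (0::complex poly)" by simp
  have c1: "[:-x,1:] * r \<noteq> 0" by (metis lx r0(1) mult_eq_0_iff)
  have c2: "degree ([:-x,1:] * r) = size (add_mset x N)" using r0 by (subst degree_mult_eq) auto
  have c3: "\<forall>z. poly ([:-x,1:] * r) z = 0 \<longleftrightarrow> z \<in># add_mset x N" using r0 by auto
  show ?case unfolding eq using c1 c2 c3 by blast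
qed

lemma poly_bound:
  fixes p :: "complex poly"
  assumes "norm z \<le> 1"
  shows "norm (poly p z) \<le> (\<Sum>i\<le>degree p. norm (coeff p i))"
proof -
  have "norm (poly p z) = norm (\<Sum>i\<le>degree p. coeff p i * z^i)" by (simp add: poly_altdef)
  also have "\<dots> \<le> (\<Sum>i\<le>degree p. norm (coeff p i * z^i))" by (rule norm_sum)
  also have "\<dots> \<le> (\<Sum>i\<le>degree p. norm (coeff p i))"
  proof (rule sum_mono)
    fix i
    have "norm (z^i) \<le> 1" using assms by (simp add: norm_power power_le_one)
    thus "norm (coeff p i * z^i) \<le> norm (coeff p i)"
      by (simp add: norm_mult mult_left_le)
  qed
  finally show ?thesis .
qed

lemma one_plus_bound:
  fixes z :: complex
  assumes "1 + Re z \<ge> 1/2"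
  shows "norm (1 + z) \<le> 1 + Re z + (Im z)^2"
proof (rule power2_le_imp_le)
  have "(norm (1 + z))^2 = (1 + Re z)^2 + (Im z)^2" by (simp add: cmod_power2)
  also have "\<dots> \<le> (1 + Re z + (Im z)^2)^2"
  proof -
    have "(1 + Re z + (Im z)^2)^2 = (1 + Re z)^2 + 2 * (1 + Re z) * (Im z)^2 + (Im z)^4"
      by (simp add: power2_eq_square power4_eq_xxxx algebra_simps)
    moreover have "2 * (1 + Re z) * (Im z)^2 \<ge> (Im z)^2"
      using assms by (simp add: mult_right_mono[of 1 "2*(1+Re z)" "(Im z)^2", simplified])
    moreover have "(Im z)^4 \<ge> 0" by simp
    ultimately show ?thesis by linarith
  qed
  finally show "(norm (1 + z))^2 \<le> (1 + Re z + (Im z)^2)^2" .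
  show "0 \<le> 1 + Re z + (Im z)^2" using assms zero_le_power2[of "Im z"] by linarith
qed

lemma pow_exp_bound:
  fixes y v :: real and n :: nat
  assumes "0 \<le> y" "y \<le> 1 + v / n" "n > 0"
  shows "y ^ n \<le> exp v"
proof -
  have "y ^ n \<le> (exp (v / n))^n"
    using assms by (intro power_mono) (auto intro: order_trans[OF _ exp_ge_add_one_self])
  also have "\<dots> = exp v" using assms(3) by (simp add: exp_of_nat_mult[symmetric])
  finally show ?thesis .
qed


theorem corollary3p7:
  fixes k :: real and p :: "complex poly" and m :: nat
  assumes "k > 0" and "p \<noteq> 0"
  shows "\<exists>(n0::nat) (W :: nat \<Rightarrow> complex set) (r :: nat \<Rightarrow> complex poly).
    (\<forall>n\<ge>n0. open (W n) \<and> connected (W n) \<and> W n \<noteq> {} \<and> 0 \<in> W n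
        \<and> r n \<noteq> 0 \<and> degree (r n) = m
        \<and> r n dvd qpoly k p n
        \<and> poly (qpoly k p n) ` W n \<subseteq> ball 0 1
        \<and> {z. poly (r n) z = 0} \<subseteq> W n)
    \<and> (\<forall>i. (\<lambda>n. coeff (r n) i) \<longlonglongrightarrow> coeff (monom 1 m) i)
    \<and> ((\<lambda>n. SUP z\<in>W n. ereal (norm z)) \<longlonglongrightarrow> 0)"
proof -
  note k0 = assms(1) and p0 = assms(2)
  define j where "j = order 0 p"
  obtain g where pg: "p = [:0,1:]^j * g" and g0: "\<not> [:0,1:] dvd g"
    using order_decomp[OF p0, of 0] unfolding j_def by auto
  define b where "b = poly g 0"
  have b0: "b \<noteq> 0" using g0 by (simp add: b_def poly_eq_0_iff_dvd)
  define \<beta> :: complex where "\<beta> = (-1)^j * of_real (real j ^ j) * b"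
  have \<beta>0: "\<beta> \<noteq> 0" by (cases "j = 0") (auto simp: \<beta>_def b0)
  define L where "L = Ln \<beta>"
  have L: "exp L = \<beta>" using \<beta>0 by (simp add: L_def)
  define R where "R = (2*m+1)*pi"
  have R0: "R > 0" by (simp add: R_def)
  define Rp where "Rp = norm L + R"
  define E where "E w = norm (exp w - \<beta>)" for w
  obtain w0 where w0: "w0 \<in> sphere L R" "\<forall>w\<in>sphere L R. E w0 \<le> E w"
  proof -
    have "\<exists>x\<in>sphere L R. \<forall>y\<in>sphere L R. E x \<le> E y"
      by (rule continuous_attains_inf) (use R0 in \<open>auto simp: E_def intro!: continuous_intros\<close>)
    thus ?thesis using that by blast
  qed
  define \<delta> where "\<delta> = E w0"
  have \<delta>0: "\<delta> > 0"
  proof (rule ccontr)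
    assume "\<not> \<delta> > 0"
    hence "exp w0 = exp L" using L by (simp add: \<delta>_def E_def)
    then obtain q :: int where q: "w0 = L + of_int (2*q) * of_real pi * \<i>" by (auto simp: exp_eq)
    have "R = dist L w0" using w0(1) by simp
    also have "\<dots> = norm (of_int (2*q) * of_real pi * \<i>)" using q by (simp add: dist_norm norm_minus_commute)
    also have "\<dots> = 2 * \<bar>q\<bar> * pi" by (simp add: norm_mult)
    finally have "(2*m+1) * pi = 2 * \<bar>q\<bar> * pi" by (simp add: R_def)
    hence "real (2*m+1) = real_of_int (2 * \<bar>q\<bar>)" by simp
    hence "int (2*m+1) = 2 * \<bar>q\<bar>" by linarith
    thus False by presburger
  qed
  have Emin: "\<forall>w\<in>sphere L R. \<delta> \<le> norm (exp w - \<beta>)" using w0 by (simp add: \<delta>_def E_def)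
  define a where "a n = ln (real n) - ln (ln (real n))" for n :: nat
  define t where "t n = real j * a n" for n :: nat
  have a1: "(\<lambda>n. a n / sqrt (real n)) \<longlonglongrightarrow> 0" unfolding a_def by real_asymp
  have a2: "(\<lambda>n. a n / real n) \<longlonglongrightarrow> 0" unfolding a_def by real_asymp
  have a3: "filterlim a at_top sequentially" unfolding a_def by real_asymp
  have a4: "(\<lambda>n. ln (ln (real n)) / ln (real n)) \<longlonglongrightarrow> 0" by real_asymp
  have a5: "eventually (\<lambda>n. a n > 0) sequentially" unfolding a_def by real_asymp
  have a6: "(\<lambda>n. 1 / sqrt (real n)) \<longlonglongrightarrow> 0" by real_asymp
  have a7: "(\<lambda>n. 1 / real n) \<longlonglongrightarrow> 0" by real_asymp
  have a8: "eventually (\<lambda>n. ln (real n) > 1) sequentially" by real_asymp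
  have T1: "(\<lambda>n. (Rp + t n)^2 / real n) \<longlonglongrightarrow> 0"
  proof (rule Lim_transform_eventually)
    have "(\<lambda>n. Rp * (1 / sqrt (real n)) + real j * (a n / sqrt (real n))) \<longlonglongrightarrow> Rp * 0 + real j * 0"
      by (intro tendsto_add tendsto_mult tendsto_const a1 a6)
    hence "(\<lambda>n. (Rp * (1 / sqrt (real n)) + real j * (a n / sqrt (real n)))^2) \<longlonglongrightarrow> (Rp * 0 + real j * 0)^2"
      by (rule tendsto_power)
    thus "(\<lambda>n. (Rp * (1 / sqrt (real n)) + real j * (a n / sqrt (real n)))^2) \<longlonglongrightarrow> 0" by simp
    show "eventually (\<lambda>n. (Rp * (1 / sqrt (real n)) + real j * (a n / sqrt (real n)))^2 = (Rp + t n)^2 / real n) sequentially"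
      using eventually_gt_at_top[of 0]
    proof eventually_elim
      case (elim n)
      have "Rp * (1 / sqrt (real n)) + real j * (a n / sqrt (real n)) = (Rp + t n) / sqrt (real n)"
        by (simp add: t_def add_divide_distrib)
      thus ?case using elim by (simp add: power_divide)
    qed
  qed
  have T2: "(\<lambda>n. (Rp + t n) / real n) \<longlonglongrightarrow> 0"
  proof -
    have "(\<lambda>n. Rp * (1 / real n) + real j * (a n / real n)) \<longlonglongrightarrow> Rp * 0 + real j * 0"
      by (intro tendsto_add tendsto_mult tendsto_const a2 a7)
    moreover have "(\<lambda>n. Rp * (1 / real n) + real j * (a n / real n)) = (\<lambda>n. (Rp + t n) / real n)"
      by (rule ext) (simp add: t_def add_divide_distrib)
    ultimately show ?thesis by (simp del: One_nat_def)
  qed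
  have T3: "(\<lambda>n. Rp / t n) \<longlonglongrightarrow> 0"
  proof (cases "j = 0")
    case True thus ?thesis by (simp add: t_def)
  next
    case False
    have "filterlim t at_top sequentially" unfolding t_def
      by (rule filterlim_tendsto_pos_mult_at_top[OF tendsto_const _ a3]) (use False in simp)
    hence "filterlim t at_infinity sequentially" by (rule filterlim_at_top_imp_at_infinity)
    thus ?thesis by (rule tendsto_divide_0[OF tendsto_const])
  qed
  have T4: "(\<lambda>n. exp (t n) * (t n / real n)^j) \<longlonglongrightarrow> real j ^ j"
  proof (rule Lim_transform_eventually)
    have "(\<lambda>n. real j * (1 - ln (ln (real n)) / ln (real n))) \<longlonglongrightarrow> real j * (1 - 0)"
      by (intro tendsto_mult tendsto_diff tendsto_const a4)
    from tendsto_power[OF this, of j]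
    show "(\<lambda>n. (real j * (1 - ln (ln (real n)) / ln (real n)))^j) \<longlonglongrightarrow> real j ^ j" by simp
    show "eventually (\<lambda>n. (real j * (1 - ln (ln (real n)) / ln (real n)))^j = exp (t n) * (t n / real n)^j) sequentially"
      using a8 eventually_gt_at_top[of 0]
    proof eventually_elim
      case (elim n)
      have ln0: "ln (real n) > 0" using elim by linarith
      have "exp (t n) = exp (a n) ^ j" unfolding t_def by (simp add: exp_of_nat_mult[symmetric])
      also have "exp (a n) = real n / ln (real n)" using elim ln0 by (simp add: a_def exp_diff)
      finally have et: "exp (t n) = (real n / ln (real n))^j" .
      have "exp (t n) * (t n / real n)^j = (real n / ln (real n) * (t n / real n))^j"
        by (simp only: et power_mult_distrib)
      also have "real n / ln (real n) * (t n / real n) = real j * (1 - ln (ln (real n)) / ln (real n))"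
        using elim ln0 by (simp add: t_def a_def field_simps)
      finally show ?case by simp
    qed
  qed
  have T5: "eventually (\<lambda>n. t n \<ge> 0) sequentially"
    using a5 by (rule eventually_mono) (simp add: t_def)
  have T6: "j > 0 \<Longrightarrow> eventually (\<lambda>n. t n > 0) sequentially"
    using a5 by (auto simp: t_def elim!: eventually_mono)
  have C: "eventually (\<lambda>n. \<forall>w. norm w \<le> Rp \<longrightarrow>
     norm (exp (of_real (t n)) * poly ([:1,1:]^n - [:0,1:]^j * g) ((w - of_real (t n)) / of_nat n)
       - (exp w - \<beta>)) < \<delta>) sequentially"
    using core[OF \<delta>0 T1 T2 T3 T4 T5 T6] by (simp add: \<beta>_def b_def)
  define \<mu> where "\<mu> n = 2 * ((Rp + t n) / real n)" for n
  define M where "M = (\<Sum>i\<le>degree p. norm (coeff p i))"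
  have Mu: "\<mu> \<longlonglongrightarrow> 0" unfolding \<mu>_def by (rule tendsto_mult_right_zero[OF T2])
  have Mu2: "(\<lambda>n. real n * \<mu> n ^ 2) \<longlonglongrightarrow> 0"
  proof (rule Lim_transform_eventually)
    show "(\<lambda>n. 4 * ((Rp + t n)^2 / real n)) \<longlonglongrightarrow> 0" by (rule tendsto_mult_right_zero[OF T1])
    show "eventually (\<lambda>n. 4 * ((Rp + t n)^2 / real n) = real n * \<mu> n ^ 2) sequentially"
      using eventually_gt_at_top[of 0]
      by (rule eventually_mono) (simp add: \<mu>_def power_divide power2_eq_square field_simps)
  qed
  have QB0: "(\<lambda>n. k * \<mu> n * (exp (2*Rp + real n * \<mu> n ^ 2) + M)) \<longlonglongrightarrow> k * 0 * (exp (2*Rp + 0) + M)"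
    by (intro tendsto_mult tendsto_add tendsto_exp tendsto_const Mu Mu2)
  hence QB: "(\<lambda>n. k * \<mu> n * (exp (2*Rp + real n * \<mu> n ^ 2) + M)) \<longlonglongrightarrow> 0" by simp
  have QB': "eventually (\<lambda>n. k * \<mu> n * (exp (2*Rp + real n * \<mu> n ^ 2) + M) < 1) sequentially"
    using QB by (rule order_tendstoD) simp
  have Mu': "eventually (\<lambda>n. \<mu> n < 1/2) sequentially"
    using Mu by (rule order_tendstoD) simp
  obtain N0 where N0: "\<And>n. n \<ge> N0 \<Longrightarrow>
       (\<forall>w. norm w \<le> Rp \<longrightarrow>
          norm (exp (of_real (t n)) * poly ([:1,1:]^n - [:0,1:]^j * g) ((w - of_real (t n)) / of_nat n)
       - (exp w - \<beta>)) < \<delta>)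
     \<and> k * \<mu> n * (exp (2*Rp + real n * \<mu> n ^ 2) + M) < 1 \<and> \<mu> n < 1/2 \<and> n > degree p \<and> t n \<ge> 0"
  proof -
    have "eventually (\<lambda>n. (\<forall>w. norm w \<le> Rp \<longrightarrow>
          norm (exp (of_real (t n)) * poly ([:1,1:]^n - [:0,1:]^j * g) ((w - of_real (t n)) / of_nat n)
       - (exp w - \<beta>)) < \<delta>)
     \<and> k * \<mu> n * (exp (2*Rp + real n * \<mu> n ^ 2) + M) < 1 \<and> \<mu> n < 1/2 \<and> n > degree p \<and> t n \<ge> 0) sequentially"
      using C QB' Mu' eventually_gt_at_top[of "degree p"] T5 by eventually_elim auto
    thus ?thesis using that unfolding eventually_sequentially by blast
  qed
  define ctr where "ctr n = (L - of_real (t n)) / of_nat n" for n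
  define \<rho> where "\<rho> n = R / real n" for n
  define W where "W n = ball (ctr n) (norm (ctr n) + 2 * \<rho> n)" for n
  define Pr where "Pr n N \<longleftrightarrow> size N = m \<and> (\<forall>x\<in>#N. x \<in> ball (ctr n) (\<rho> n))
      \<and> (\<Prod>x\<in>#N. [:-x,1:]) dvd ([:1,1:]^n - p)" for n N
  have exN: "\<exists>N. Pr n N" if n: "n \<ge> N0" for n
  proof -
    note Nn = N0[OF n]
    have npos: "n > 0" using Nn by auto
    have Q0: "[:1,1:]^n - p \<noteq> 0"
    proof
      assume "[:1,1:]^n - p = 0"
      hence "degree p = degree ([:1::complex,1:]^n)" by simp
      thus False using Nn by (simp add: degree_linear_power)
    qed
    have close: "\<forall>w\<in>sphere L ((2*m+1)*pi).
        norm (exp (of_real (t n)) * poly ([:1,1:]^n - p) ((w - of_real (t n))/of_nat n) - (exp w - \<beta>)) < \<delta>"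
    proof
      fix w assume w: "w \<in> sphere L ((2*m+1)*pi)"
      have "norm w \<le> norm L + dist L w" by (metis dist_norm norm_minus_commute norm_triangle_sub)
      hence "norm w \<le> Rp" using w by (simp add: Rp_def R_def)
      thus "norm (exp (of_real (t n)) * poly ([:1,1:]^n - p) ((w - of_real (t n))/of_nat n) - (exp w - \<beta>)) < \<delta>"
        using Nn pg by auto
    qed
    have cnt: "2*m+1 \<le> size (filter_mset (\<lambda>z. z \<in> ball ((L - of_real (t n)) / of_nat n) ((2*m+1)*pi / n)) (proots ([:1,1:]^n - p)))"
      by (rule count_zeros[OF npos Q0 L \<delta>0 _ close]) (use Emin in \<open>simp add: R_def\<close>)
    have "m \<le> size (filter_mset (\<lambda>z. z \<in> ball (ctr n) (\<rho> n)) (proots ([:1,1:]^n - p)))"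
      using cnt by (simp add: ctr_def \<rho>_def R_def)
    from exists_divisor[OF Q0 this] show ?thesis unfolding Pr_def by blast
  qed
  obtain Nf where Nf: "\<And>n. n \<ge> N0 \<Longrightarrow> Pr n (Nf n)"
    using exN by metis
  define r where "r n = (\<Prod>x\<in>#Nf n. [:-x,1:])" for n
  have Wnorm: "norm z \<le> \<mu> n" if n: "n \<ge> N0" and z: "z \<in> W n" for n z
  proof -
    have tn: "t n \<ge> 0" and npos: "n > 0" using N0[OF n] by auto
    have "norm (ctr n) \<le> (norm L + t n) / n"
    proof -
      have "norm (L - of_real (t n)) \<le> norm L + t n"
        using norm_triangle_ineq4[of L "of_real (t n)"] tn by simp
      thus ?thesis using npos by (simp add: ctr_def norm_divide divide_right_mono)
    qed
    moreover have "norm z \<le> norm (ctr n) + dist (ctr n) z"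
      by (metis dist_norm norm_minus_commute norm_triangle_sub add.commute)
    moreover have "dist (ctr n) z < norm (ctr n) + 2 * \<rho> n" using z by (simp add: W_def)
    ultimately have "norm z \<le> 2 * ((norm L + t n) / n) + 2 * (R / n)"
      unfolding \<rho>_def by linarith
    also have "\<dots> = \<mu> n" by (simp add: \<mu>_def Rp_def add_divide_distrib)
    finally show ?thesis .
  qed
  have WRe: "Re z \<le> 2 * Rp / n" if n: "n \<ge> N0" and z: "z \<in> W n" for n z
  proof -
    have tn: "t n \<ge> 0" and npos: "n > 0" using N0[OF n] by auto
    have nc: "norm (ctr n) \<le> (norm L + t n) / n"
    proof -
      have "norm (L - of_real (t n)) \<le> norm L + t n"
        using norm_triangle_ineq4[of L "of_real (t n)"] tn by simp
      thus ?thesis using npos by (simp add: ctr_def norm_divide divide_right_mono)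
    qed
    have rc: "Re (ctr n) = (Re L - t n) / n" by (simp add: ctr_def Re_divide_of_nat)
    have "Re z = Re (ctr n) + Re (z - ctr n)" by simp
    also have "Re (z - ctr n) \<le> norm (z - ctr n)" by (rule complex_Re_le_cmod)
    also have "norm (z - ctr n) < norm (ctr n) + 2 * \<rho> n"
      using z by (simp add: W_def dist_norm norm_minus_commute)
    finally have "Re z < (Re L - t n) / n + (norm L + t n) / n + 2 * (R / n)"
      using nc rc by (simp add: \<rho>_def)
    also have "\<dots> = (Re L + norm L + 2 * R) / n" by (simp add: add_divide_distrib diff_divide_distrib)
    also have "\<dots> \<le> (2 * norm L + 2 * R) / n"
      using complex_Re_le_cmod[of L] npos by (simp add: divide_right_mono)
    also have "\<dots> = 2 * Rp / n" by (simp add: Rp_def)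
    finally show ?thesis by simp
  qed
  have bW: "ball (ctr n) (\<rho> n) \<subseteq> W n" if n: "n \<ge> N0" for n
  proof -
    have "n > 0" using N0[OF n] by auto
    hence "\<rho> n > 0" using R0 by (simp add: \<rho>_def)
    thus ?thesis unfolding W_def by (intro subset_ball) (simp add: add_increasing)
  qed
  have main: "\<forall>n\<ge>N0. open (W n) \<and> connected (W n) \<and> W n \<noteq> {} \<and> 0 \<in> W n
        \<and> r n \<noteq> 0 \<and> degree (r n) = m
        \<and> r n dvd qpoly k p n
        \<and> poly (qpoly k p n) ` W n \<subseteq> ball 0 1
        \<and> {z. poly (r n) z = 0} \<subseteq> W n"
  proof (intro allI impI)
    fix n assume n: "n \<ge> N0"
    note Nn = N0[OF n]
    have npos: "n > 0" using Nn by auto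
    have P: "Pr n (Nf n)" by (rule Nf[OF n])
    have rp: "r n \<noteq> 0" "degree (r n) = m" "\<forall>z. poly (r n) z = 0 \<longleftrightarrow> z \<in># Nf n"
      using prod_lin_props[of "Nf n"] P by (auto simp: r_def Pr_def)
    have \<rho>0: "\<rho> n > 0" using npos R0 by (simp add: \<rho>_def)
    have W0: "0 \<in> W n" using \<rho>0 by (simp add: W_def)
    have dv: "r n dvd qpoly k p n"
    proof -
      have "r n dvd [:1,1:]^n - p" using P by (simp add: r_def Pr_def)
      hence "r n dvd [:0,1:] * ([:1,1:]^n - p)" by (rule dvd_mult)
      thus ?thesis unfolding qpoly_def by (rule dvd_smult)
    qed
    have roots: "{z. poly (r n) z = 0} \<subseteq> W n"
    proof
      fix z assume "z \<in> {z. poly (r n) z = 0}"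
      hence "z \<in> ball (ctr n) (\<rho> n)" using rp(3) P by (auto simp: Pr_def)
      thus "z \<in> W n" using bW[OF n] by blast
    qed
    have img: "poly (qpoly k p n) ` W n \<subseteq> ball 0 1"
    proof
      fix y assume "y \<in> poly (qpoly k p n) ` W n"
      then obtain z where z: "z \<in> W n" "y = poly (qpoly k p n) z" by auto
      have nz: "norm z \<le> \<mu> n" by (rule Wnorm[OF n z(1)])
      have mu: "\<mu> n < 1/2" "k * \<mu> n * (exp (2*Rp + real n * \<mu> n ^ 2) + M) < 1" using Nn by auto
      have reb: "Re z \<le> 2 * Rp / n" by (rule WRe[OF n z(1)])
      have "\<bar>Re z\<bar> \<le> norm z" by (rule abs_Re_le_cmod)
      hence re1: "1 + Re z \<ge> 1/2" using nz mu by linarith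
      have "(Im z)^2 \<le> (\<mu> n)^2"
        using abs_Im_le_cmod[of z] nz by (metis abs_ge_zero order_trans power2_abs power_mono)
      hence "norm (1 + z) \<le> 1 + 2 * Rp / n + (\<mu> n)^2"
        using one_plus_bound[OF re1] reb by linarith
      also have "\<dots> = 1 + (2 * Rp + real n * \<mu> n ^ 2) / n" using npos by (simp add: field_simps)
      finally have "norm (1 + z) ^ n \<le> exp (2 * Rp + real n * \<mu> n ^ 2)"
        by (intro pow_exp_bound) (use npos in auto)
      hence e1: "norm ((1 + z) ^ n) \<le> exp (2 * Rp + real n * \<mu> n ^ 2)" by (simp add: norm_power)
      have e2: "norm (poly p z) \<le> M" unfolding M_def by (rule poly_bound) (use nz mu in linarith)
      have "norm ((1 + z) ^ n - poly p z) \<le> exp (2 * Rp + real n * \<mu> n ^ 2) + M"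
        using norm_triangle_ineq4[of "(1 + z) ^ n" "poly p z"] e1 e2 by linarith
      moreover have "poly (qpoly k p n) z = of_real k * (z * ((1 + z) ^ n - poly p z))"
        by (simp add: qpoly_def poly_power add.commute)
      moreover note e3 = calculation(1)
      have "norm z * norm ((1 + z) ^ n - poly p z) \<le> \<mu> n * (exp (2 * Rp + real n * \<mu> n ^ 2) + M)"
        by (rule mult_mono[OF nz e3]) (use order_trans[OF norm_ge_zero nz] in auto)
      ultimately have "norm y \<le> k * (\<mu> n * (exp (2 * Rp + real n * \<mu> n ^ 2) + M))"
        using z(2) k0 by (simp add: norm_mult mult_left_mono)
      thus "y \<in> ball 0 1" using mu by simp
    qed
    have o: "open (W n)" by (simp add: W_def)
    have c: "connected (W n)" by (simp add: W_def)
    have ne: "W n \<noteq> {}" using W0 by blast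
    show "open (W n) \<and> connected (W n) \<and> W n \<noteq> {} \<and> 0 \<in> W n
        \<and> r n \<noteq> 0 \<and> degree (r n) = m
        \<and> r n dvd qpoly k p n
        \<and> poly (qpoly k p n) ` W n \<subseteq> ball 0 1
        \<and> {z. poly (r n) z = 0} \<subseteq> W n"
      by (intro conjI W0 rp(1) rp(2) dv img roots o c ne)
  qed
  have coef: "(\<lambda>n. coeff (r n) i) \<longlonglongrightarrow> coeff (monom 1 m) i" for i
  proof (rule LIM_zero_cancel, rule Lim_null_comparison)
    show "eventually (\<lambda>n. norm (coeff (r n) i - coeff (monom 1 m) i) \<le> (2^m - 1) * \<mu> n) sequentially"
      unfolding eventually_sequentially
    proof (intro exI allI impI)
      fix n assume n: "n \<ge> N0"
      have P: "Pr n (Nf n)" by (rule Nf[OF n])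
      have roots: "\<forall>x\<in>#Nf n. norm x \<le> \<mu> n"
      proof
        fix x assume "x \<in># Nf n"
        hence "x \<in> ball (ctr n) (\<rho> n)" using P by (auto simp: Pr_def)
        hence "x \<in> W n" using bW[OF n] by blast
        thus "norm x \<le> \<mu> n" by (rule Wnorm[OF n])
      qed
      have "\<mu> n \<le> 1" using N0[OF n] by auto
      from coeff_prod_roots_bound[OF roots this] P
      show "norm (coeff (r n) i - coeff (monom 1 m) i) \<le> (2^m - 1) * \<mu> n"
        by (auto simp: r_def Pr_def)
    qed
    show "(\<lambda>n. (2^m - 1) * \<mu> n) \<longlonglongrightarrow> 0" by (rule tendsto_mult_right_zero[OF Mu])
  qed
  have sup: "(\<lambda>n. SUP z\<in>W n. ereal (norm z)) \<longlonglongrightarrow> 0"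
  proof (rule tendsto_sandwich[of "\<lambda>n. 0" _ _ "\<lambda>n. ereal (\<mu> n)"])
    show "eventually (\<lambda>n. 0 \<le> (SUP z\<in>W n. ereal (norm z))) sequentially"
      unfolding eventually_sequentially
    proof (intro exI allI impI)
      fix n assume n: "n \<ge> N0"
      have "0 \<in> W n" using main n by blast
      thus "0 \<le> (SUP z\<in>W n. ereal (norm z))" by (rule SUP_upper2) simp
    qed
    show "eventually (\<lambda>n. (SUP z\<in>W n. ereal (norm z)) \<le> ereal (\<mu> n)) sequentially"
      unfolding eventually_sequentially
    proof (intro exI[of _ N0] allI impI)
      fix n assume n: "n \<ge> N0"
      show "(SUP z\<in>W n. ereal (norm z)) \<le> ereal (\<mu> n)"
        by (rule SUP_least) (simp add: Wnorm[OF n])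
    qed
    show "(\<lambda>n. 0) \<longlonglongrightarrow> (0::ereal)" by simp
    show "(\<lambda>n. ereal (\<mu> n)) \<longlonglongrightarrow> 0" using tendsto_ereal[OF Mu] by (simp add: zero_ereal_def)
  qed
  show ?thesis
    apply (rule exI[of _ N0], rule exI[of _ W], rule exI[of _ r])
    apply (rule conjI[OF main])
    apply (rule conjI[OF allI[OF coef] sup])
    done
qed

end
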